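(* Let $Y \sim N(\theta, \sigma^2)$ with $\sigma^2>0$ known and $\theta\in\mathbb{R}$ unknown, and let the selection function be $p(y) = \mathbf{1}(y>t)$ for some fixed $t\in\mathbb{R}$, so that the selection event is $S=\{Y>t\}$ and the selection probability is $\varphi(\theta) = \mathbb{P}_\theta(Y>t) = \Phi\{(\theta-t)/\sigma\}$. For $y\in\mathbb{R}$ let \[ \Pi(\theta\mid y) = \frac{\int_{-\infty}^\theta \phi\{\sigma^{-1}(\tilde{\theta} - y) \}\, \varphi(\tilde\theta)^{-1} \,\mathrm{d}\tilde\theta}{\int_{-\infty}^\infty \phi\{\sigma^{-1}(\tilde{\theta} - y) \}\, \varphi(\tilde\theta)^{-1}\, \mathrm{d}\tilde\theta} \] be the selective posterior distribution function of $\theta$ based on the uniform prior $\pi(\theta)\propto 1$, and let $\Pi^{-1}(\alpha\mid y)$ denote its $\alpha$-quantile (inverse in $\theta$). Then \[ \mathbb{P}_{\theta_0}\{\theta_0 \leq \Pi^{-1}(\alpha\mid Y)\mid S\} < \alpha \quad \text{for all } (\alpha, \theta_0) \in (0,1)\times \mathbb{R}, \] where the probability is computed under the conditional distribution of $Y\sim N(\theta_0,\sigma^2)$ given $Y>t$.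
   Context: $\phi$ and $\Phi$ denote the standard normal density and distribution function respectively. The selective posterior is obtained by attaching the prior to the selective likelihood, i.e. the density of $Y$ conditional on selection, $f(y\mid S;\theta)=f(y;\theta)p(y)/\varphi(\theta)$, where $\varphi(\theta)=\mathbb{E}_\theta[p(Y)]$ is the probability of selection under parameter $\theta$. *)

theory Defs
  imports "HOL-Probability.Probability"
begin

definition std_normal_cdf :: "real \<Rightarrow> real" where
  "std_normal_cdf x = measure (density lborel std_normal_density) {..x}"

definition sel_prob :: "real \<Rightarrow> real \<Rightarrow> real \<Rightarrow> real" where
  "sel_prob \<sigma> t \<theta> = std_normal_cdf ((\<theta> - t) / \<sigma>)"

definition sel_post_cdf :: "real \<Rightarrow> real \<Rightarrow> real \<Rightarrow> real \<Rightarrow> real" where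
  "sel_post_cdf \<sigma> t y \<theta> =
     (LBINT s:{..\<theta>}. std_normal_density ((s - y) / \<sigma>) / sel_prob \<sigma> t s) /
     (LBINT s. std_normal_density ((s - y) / \<sigma>) / sel_prob \<sigma> t s)"

definition sel_post_quantile :: "real \<Rightarrow> real \<Rightarrow> real \<Rightarrow> real \<Rightarrow> real" where
  "sel_post_quantile \<sigma> t \<alpha> y = Inf {\<theta>. \<alpha> \<le> sel_post_cdf \<sigma> t y \<theta>}"

end

theory Submission
  imports Defs
begin

abbreviation "phi \<equiv> std_normal_density"
abbreviation "Phi \<equiv> std_normal_cdf"

lemma phi_pos: "0 < phi x"
  by (simp add: normal_density_pos)

lemma phi_formula: "phi x = exp (- x\<^sup>2 / 2) / sqrt (2 * pi)"
  by (simp add: std_normal_density_def)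

lemma phi_deriv: "DERIV phi x :> - x * phi x"
  unfolding phi_formula[abs_def]
  by (auto intro!: derivative_eq_intros simp: power2_eq_square field_simps)

lemma phi_cont: "isCont phi x"
  using phi_deriv DERIV_isCont by blast

lemma exp_set_integrable:
  fixes a b :: real
  assumes "a > 0"
  shows "set_integrable lborel {..b} (\<lambda>x. exp (a * x))"
proof -
  have "(\<lambda>x. exp (- a * x)) absolutely_integrable_on {-b..}"
    by (rule nonnegative_absolutely_integrable_1[OF integrable_on_exp_minus_to_infinity[OF assms]]) auto
  hence "set_integrable lebesgue {-b..} (\<lambda>x. exp (- a * x))"
    by (simp add: absolutely_integrable_on_def)
  hence "set_integrable lborel {-b..} (\<lambda>x. exp (- a * x))"
    unfolding set_integrable_def
    by (subst (asm) integrable_completion) auto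
  hence "integrable lborel (\<lambda>x. indicator {-b..} (0 + (-1) * x) *\<^sub>R exp (- a * (0 + (-1) * x)))"
    unfolding set_integrable_def by (intro lborel_integrable_real_affine) auto
  thus ?thesis unfolding set_integrable_def
    by (rule Bochner_Integration.integrable_cong[THEN iffD1, rotated 2]) (auto split: split_indicator)
qed

lemma Phi_eq: "Phi x = (LBINT u:{..x}. phi u)"
proof -
  have "Phi x = enn2real (emeasure (density lborel phi) {..x})"
    unfolding std_normal_cdf_def measure_def ..
  also have "emeasure (density lborel phi) {..x} = (\<integral>\<^sup>+u. ennreal (indicator {..x} u * phi u) \<partial>lborel)"
    by (subst emeasure_density) (auto intro!: nn_integral_cong split: split_indicator)
  also have "\<dots> = ennreal (LBINT u:{..x}. phi u)"
    unfolding set_lebesgue_integral_def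
    by (subst nn_integral_eq_integral) (auto simp: mult.commute intro!: integrable_mult_indicator[of "{..x}" lborel phi, simplified])
  finally show ?thesis
    by (simp add: set_lebesgue_integral_def integral_nonneg)
qed

lemma DERIV_LBINT_atMost:
  fixes f :: "real \<Rightarrow> real"
  assumes int: "integrable lborel f" and cont: "\<And>x. isCont f x"
  shows "DERIV (\<lambda>v. LBINT u:{..v}. f u) x :> f x"
proof -
  define a where "a = x - 1"
  define b where "b = x + 1"
  have si: "set_integrable lborel A f" if "A \<in> sets borel" for A
    unfolding set_integrable_def using that int by (intro integrable_mult_indicator) auto
  have eq: "(LBINT u:{..v}. f u) = (LBINT u:{..a}. f u) + (LBINT u=a..v. f u)" if "v \<in> {a<..<b}" for v
  proof -
    have "{..v} = {..a} \<union> {a<..v}" using that by auto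
    hence "(LBINT u:{..v}. f u) = (LBINT u:{..a}. f u) + (LBINT u:{a<..v}. f u)"
      by (simp only:) (rule set_integral_Un, auto intro: si)
    also have "(LBINT u:{a<..v}. f u) = (LBINT u=a..v. f u)"
      using that by (simp add: interval_integral_Ioc)
    finally show ?thesis .
  qed
  have "((\<lambda>u. LBINT y=a..u. f y) has_vector_derivative (f x)) (at x within {a..b})"
    by (rule interval_integral_FTC2) (auto simp: a_def b_def intro!: continuous_at_imp_continuous_on cont)
  hence "((\<lambda>u. LBINT y=a..u. f y) has_vector_derivative (f x)) (at x)"
    by (simp add: at_within_Icc_at a_def b_def)
  hence "DERIV (\<lambda>u. (LBINT u:{..a}. f u) + (LBINT y=a..u. f y)) x :> f x"
    by (auto simp: has_real_derivative_iff_has_vector_derivative intro!: derivative_eq_intros)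
  thus ?thesis
    by (rule has_field_derivative_transform_within_open[where S="{a<..<b}"])
       (auto simp: a_def b_def eq)
qed

lemma Phi_deriv: "DERIV Phi x :> phi x"
  unfolding Phi_eq[abs_def] by (rule DERIV_LBINT_atMost) (auto intro: phi_cont)

lemma Phi_deriv_chain[derivative_intros]:
  "(f has_real_derivative f') (at x) \<Longrightarrow> ((\<lambda>x. Phi (f x)) has_real_derivative phi (f x) * f') (at x)"
  using DERIV_chain2[OF Phi_deriv] by blast

lemma phi_deriv_chain[derivative_intros]:
  "(f has_real_derivative f') (at x) \<Longrightarrow> ((\<lambda>x. phi (f x)) has_real_derivative (- f x * phi (f x)) * f') (at x)"
  using DERIV_chain2[OF phi_deriv] by blast

lemma Phi_cont: "isCont Phi x"
  using Phi_deriv DERIV_isCont by blast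

lemma Phi_continuous_on: "continuous_on A Phi"
  by (simp add: Phi_cont continuous_at_imp_continuous_on)

interpretation stdN: real_distribution "density lborel phi"
proof -
  interpret prob_space "density lborel phi"
    using prob_space_normal_density by simp
  show "real_distribution (density lborel phi)" by standard auto
qed

lemma Phi_cdf: "Phi = cdf (density lborel phi)"
  by (simp add: fun_eq_iff std_normal_cdf_def cdf_def)

lemma Phi_lim_bot: "(Phi \<longlongrightarrow> 0) at_bot"
  unfolding Phi_cdf by (rule stdN.cdf_lim_at_bot)

lemma Phi_lim_top: "(Phi \<longlongrightarrow> 1) at_top"
  unfolding Phi_cdf by (rule stdN.cdf_lim_at_top_prob)

lemma Phi_le1: "Phi x \<le> 1"
  unfolding Phi_cdf by (rule stdN.cdf_bounded_prob)

lemma Phi_strict_mono: "x < y \<Longrightarrow> Phi x < Phi y"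
  by (rule DERIV_pos_imp_increasing) (auto intro!: exI Phi_deriv phi_pos)

lemma Phi_mono: "x \<le> y \<Longrightarrow> Phi x \<le> Phi y"
  using Phi_strict_mono[of x y] by (cases "x = y") auto

lemma Phi_pos: "0 < Phi x"
  using DERIV_pos_imp_increasing_at_bot[of x Phi 0] Phi_lim_bot Phi_deriv phi_pos by blast

lemma Phi_less1: "Phi x < 1"
  using Phi_strict_mono[of x "x+1"] Phi_le1[of "x+1"] by simp

lemma phi_lim_bot: "(phi \<longlongrightarrow> 0) at_bot"
  unfolding phi_formula[abs_def] by real_asymp

lemma xphi_lim_bot: "((\<lambda>x. x * phi x) \<longlongrightarrow> 0) at_bot"
  unfolding phi_formula[abs_def] by real_asymp

lemma phi_div_lim_bot: "((\<lambda>x. phi x / (- x)) \<longlongrightarrow> 0) at_bot"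
  unfolding phi_formula[abs_def] by real_asymp

lemma mills_upper:
  assumes "x < 0"
  shows "Phi x < phi x / (- x)"
proof -
  let ?w = "\<lambda>x. phi x / (- x) - Phi x"
  have "0 < ?w x"
  proof (rule DERIV_pos_imp_increasing_at_bot[where f="?w" and b=x])
    fix z assume "z \<le> x"
    hence z: "z < 0" using assms by simp
    have "DERIV ?w z :> (- z * phi z * (- z) - phi z * (- 1)) / (- z)\<^sup>2 - phi z"
      using z by (auto intro!: derivative_eq_intros phi_deriv Phi_deriv simp: field_simps power2_eq_square)
    moreover have "(- z * phi z * (- z) - phi z * (- 1)) / (- z)\<^sup>2 - phi z = phi z / z\<^sup>2"
      using z by (simp add: field_simps power2_eq_square)
    moreover have "phi z / z\<^sup>2 > 0" using z phi_pos[of z] by simp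
    ultimately show "\<exists>y. DERIV ?w z :> y \<and> 0 < y" by auto
  next
    show "(?w \<longlongrightarrow> 0) at_bot"
      using tendsto_diff[OF phi_div_lim_bot Phi_lim_bot] by simp
  qed
  thus ?thesis by simp
qed

lemma xPhi_lim_bot: "((\<lambda>x. x * Phi x) \<longlongrightarrow> 0) at_bot"
proof (rule tendsto_sandwich[where f="\<lambda>x. - phi x" and h="\<lambda>x. 0"])
  show "\<forall>\<^sub>F x in at_bot. - phi x \<le> x * Phi x"
    unfolding eventually_at_bot_linorder
  proof (intro exI[of _ "-1"] allI impI)
    fix x :: real assume "x \<le> -1"
    hence "Phi x < phi x / (- x)" by (intro mills_upper) simp
    thus "- phi x \<le> x * Phi x" using \<open>x \<le> -1\<close> by (simp add: field_simps)
  qed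
  show "\<forall>\<^sub>F x in at_bot. x * Phi x \<le> 0"
    unfolding eventually_at_bot_linorder
    by (intro exI[of _ "0"] allI impI) (simp add: mult_nonpos_nonneg less_imp_le[OF Phi_pos])
  show "((\<lambda>x. - phi x) \<longlongrightarrow> 0) at_bot" using tendsto_minus[OF phi_lim_bot] by simp
qed simp

lemma x2Phi_lim_bot: "((\<lambda>x. x\<^sup>2 * Phi x) \<longlongrightarrow> 0) at_bot"
proof (rule tendsto_sandwich[where f="\<lambda>x. 0" and h="\<lambda>x. - x * phi x"])
  show "\<forall>\<^sub>F x in at_bot. x\<^sup>2 * Phi x \<le> - x * phi x"
    unfolding eventually_at_bot_linorder
  proof (intro exI[of _ "-1"] allI impI)
    fix x :: real assume "x \<le> -1"
    hence "Phi x < phi x / (- x)" by (intro mills_upper) simp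
    hence "(- x) * Phi x < phi x" using \<open>x \<le> -1\<close> by (simp add: field_simps)
    hence "(- x) * ((- x) * Phi x) \<le> (- x) * phi x"
      using \<open>x \<le> -1\<close> by (intro mult_left_mono) auto
    thus "x\<^sup>2 * Phi x \<le> - x * phi x" by (simp add: power2_eq_square)
  qed
  show "\<forall>\<^sub>F x in at_bot. 0 \<le> x\<^sup>2 * Phi x"
    by (simp add: less_imp_le[OF Phi_pos])
  show "((\<lambda>x. - x * phi x) \<longlongrightarrow> 0) at_bot" using tendsto_minus[OF xphi_lim_bot] by simp
qed simp

lemma Psi_pos: "0 < x * Phi x + phi x"
proof -
  have "0 < (\<lambda>x. x * Phi x + phi x) x"
  proof (rule DERIV_pos_imp_increasing_at_bot[where f="\<lambda>x. x * Phi x + phi x" and b=x])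
    fix z :: real assume "z \<le> x"
    have "DERIV (\<lambda>x. x * Phi x + phi x) z :> 1 * Phi z + z * phi z + (- z * phi z)"
      by (auto intro!: derivative_eq_intros phi_deriv Phi_deriv)
    thus "\<exists>y. DERIV (\<lambda>x. x * Phi x + phi x) z :> y \<and> 0 < y" using Phi_pos[of z] by auto
  next
    show "((\<lambda>x. x * Phi x + phi x) \<longlongrightarrow> 0) at_bot"
      using tendsto_add[OF xPhi_lim_bot phi_lim_bot] by simp
  qed
  thus ?thesis by simp
qed

lemma f2_pos: "0 < (1 + x\<^sup>2) * Phi x + x * phi x"
proof -
  have "0 < (\<lambda>x. (1 + x\<^sup>2) * Phi x + x * phi x) x"
  proof (rule DERIV_pos_imp_increasing_at_bot[where f="\<lambda>x. (1 + x\<^sup>2) * Phi x + x * phi x" and b=x])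
    fix z :: real assume "z \<le> x"
    have "DERIV (\<lambda>x. (1 + x\<^sup>2) * Phi x + x * phi x) z :>
       (2 * z) * Phi z + (1 + z\<^sup>2) * phi z + (1 * phi z + z * (- z * phi z))"
      by (auto intro!: derivative_eq_intros phi_deriv Phi_deriv simp: power2_eq_square)
    moreover have "(2 * z) * Phi z + (1 + z\<^sup>2) * phi z + (1 * phi z + z * (- z * phi z))
        = 2 * (z * Phi z + phi z)"
      by (simp add: algebra_simps power2_eq_square)
    ultimately show "\<exists>y. DERIV (\<lambda>x. (1 + x\<^sup>2) * Phi x + x * phi x) z :> y \<and> 0 < y"
      using Psi_pos[of z] by auto
  next
    have "((\<lambda>x. Phi x + x\<^sup>2 * Phi x + x * phi x) \<longlongrightarrow> 0 + 0 + 0) at_bot"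
      by (intro tendsto_add Phi_lim_bot x2Phi_lim_bot xphi_lim_bot)
    thus "((\<lambda>x. (1 + x\<^sup>2) * Phi x + x * phi x) \<longlongrightarrow> 0) at_bot"
      by (simp add: algebra_simps)
  qed
  thus ?thesis by simp
qed

lemma h_pos: "0 < (Phi x)\<^sup>2 - x * phi x * Phi x - (phi x)\<^sup>2"
proof -
  let ?h = "\<lambda>x. (Phi x)\<^sup>2 - x * phi x * Phi x - (phi x)\<^sup>2"
  have "0 < ?h x"
  proof (rule DERIV_pos_imp_increasing_at_bot[where f="?h" and b=x])
    fix z :: real assume "z \<le> x"
    have "DERIV ?h z :> 2 * Phi z * phi z - ((1 * phi z + z * (- z * phi z)) * Phi z + z * phi z * phi z)
          - 2 * phi z * (- z * phi z)"
      by (auto intro!: derivative_eq_intros phi_deriv Phi_deriv simp: power2_eq_square)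
    moreover have "2 * Phi z * phi z - ((1 * phi z + z * (- z * phi z)) * Phi z + z * phi z * phi z)
          - 2 * phi z * (- z * phi z) = phi z * ((1 + z\<^sup>2) * Phi z + z * phi z)"
      by (simp add: algebra_simps power2_eq_square)
    moreover have "0 < phi z * ((1 + z\<^sup>2) * Phi z + z * phi z)"
      using phi_pos[of z] f2_pos[of z] by simp
    ultimately show "\<exists>y. DERIV ?h z :> y \<and> 0 < y" by auto
  next
    have "((\<lambda>x. (Phi x)\<^sup>2 - phi x * (x * Phi x) - (phi x)\<^sup>2) \<longlongrightarrow> 0\<^sup>2 - 0 * 0 - 0\<^sup>2) at_bot"
      by (intro tendsto_diff tendsto_mult tendsto_power Phi_lim_bot phi_lim_bot xPhi_lim_bot)
    thus "(?h \<longlongrightarrow> 0) at_bot" by (simp add: algebra_simps)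
  qed
  thus ?thesis by simp
qed

definition lam :: "real \<Rightarrow> real" where "lam x = phi x / Phi x + x"

lemma lam_strict_mono: "u < v \<Longrightarrow> lam u < lam v"
proof (rule DERIV_pos_imp_increasing[where f=lam])
  fix z :: real
  have P: "Phi z \<noteq> 0" using Phi_pos[of z] by simp
  have "DERIV lam z :> ((- z * phi z) * Phi z - phi z * phi z) / (Phi z * Phi z) + 1"
    unfolding lam_def[abs_def] using P by (auto intro!: derivative_eq_intros phi_deriv Phi_deriv)
  moreover have "((- z * phi z) * Phi z - phi z * phi z) / (Phi z * Phi z) + 1
     = ((Phi z)\<^sup>2 - z * phi z * Phi z - (phi z)\<^sup>2) / (Phi z)\<^sup>2"
    using P by (simp add: field_simps power2_eq_square)
  moreover have "0 < ((Phi z)\<^sup>2 - z * phi z * Phi z - (phi z)\<^sup>2) / (Phi z)\<^sup>2"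
    using h_pos[of z] P by simp
  ultimately show "\<exists>y. DERIV lam z :> y \<and> 0 < y" by auto
qed

lemma R_strict_mono: "u < v \<Longrightarrow> Phi u / phi u < Phi v / phi v"
proof (rule DERIV_pos_imp_increasing[where f="\<lambda>x. Phi x / phi x"])
  fix z :: real
  have P: "phi z \<noteq> 0" using phi_pos[of z] by simp
  have "DERIV (\<lambda>x. Phi x / phi x) z :> (phi z * phi z - Phi z * (- z * phi z)) / (phi z * phi z)"
    using P by (auto intro!: derivative_eq_intros phi_deriv Phi_deriv)
  moreover have "(phi z * phi z - Phi z * (- z * phi z)) / (phi z * phi z) = (z * Phi z + phi z) / phi z"
    using P by (simp add: field_simps)
  moreover have "0 < (z * Phi z + phi z) / phi z"
    using Psi_pos[of z] phi_pos[of z] by simp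
  ultimately show "\<exists>y. DERIV (\<lambda>x. Phi x / phi x) z :> y \<and> 0 < y" by auto
qed

lemma phi_shift: "phi (v + e) = exp (- e * v - e\<^sup>2 / 2) * phi v"
proof -
  have "exp (- (v + e)\<^sup>2 / 2) = exp (- e * v - e\<^sup>2 / 2) * exp (- v\<^sup>2 / 2)"
    by (simp add: exp_add[symmetric] power2_eq_square field_simps)
  thus ?thesis by (simp add: phi_formula)
qed

definition kk :: "real \<Rightarrow> real \<Rightarrow> real" where "kk e u = phi u / Phi (u + e)"
definition rho :: "real \<Rightarrow> real \<Rightarrow> real" where
  "rho e v = exp (- e * v - e\<^sup>2 / 2) * Phi v / Phi (v + e)"
definition GG :: "real \<Rightarrow> real \<Rightarrow> real" where "GG e v = Phi v / Phi (v + e)"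

lemma kk_pos: "0 < kk e u"
  by (simp add: kk_def phi_pos Phi_pos)

lemma rho_pos: "0 < rho e v"
  by (simp add: rho_def Phi_pos)

lemma rho_less1:
  assumes "e > 0" shows "rho e v < 1"
proof -
  have "Phi v / phi v < Phi (v + e) / phi (v + e)"
    using R_strict_mono[of v "v + e"] assms by simp
  hence "Phi v * phi (v + e) < Phi (v + e) * phi v"
    using phi_pos[of v] phi_pos[of "v+e"] by (simp add: field_simps)
  hence "exp (- e * v - e\<^sup>2 / 2) * Phi v * phi v < Phi (v + e) * phi v"
    by (simp add: phi_shift mult_ac)
  hence "exp (- e * v - e\<^sup>2 / 2) * Phi v < Phi (v + e)"
    using phi_pos[of v] by simp
  thus ?thesis using Phi_pos[of "v+e"] by (simp add: rho_def)
qed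

lemma rho_deriv: "DERIV (rho e) v :> rho e v * (lam v - lam (v + e))"
proof -
  have P: "Phi v \<noteq> 0" "Phi (v + e) \<noteq> 0" using Phi_pos by (auto simp: less_imp_neq[symmetric])
  show ?thesis
    unfolding rho_def[abs_def] lam_def
    using P by (auto intro!: derivative_eq_intros phi_deriv Phi_deriv simp: field_simps power2_eq_square)
qed

lemma rho_strict_anti:
  assumes "e > 0" "u < v" shows "rho e v < rho e u"
proof (rule DERIV_neg_imp_decreasing[where f="rho e"])
  fix z :: real
  have "rho e z * (lam z - lam (z + e)) < 0"
    using rho_pos[of e z] lam_strict_mono[of z "z + e"] assms by (simp add: mult_pos_neg)
  thus "\<exists>y. DERIV (rho e) z :> y \<and> y < 0" using rho_deriv by blast
qed (use assms in auto)

lemma GG_deriv: "DERIV (GG e) v :> kk e v * (1 - rho e v)"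
proof -
  have P: "Phi (v + e) \<noteq> 0" using Phi_pos by (auto simp: less_imp_neq[symmetric])
  have "DERIV (GG e) v :> (phi v * Phi (v + e) - Phi v * phi (v + e)) / (Phi (v + e) * Phi (v + e))"
    unfolding GG_def[abs_def] using P by (auto intro!: derivative_eq_intros phi_deriv Phi_deriv)
  moreover have "(phi v * Phi (v + e) - Phi v * phi (v + e)) / (Phi (v + e) * Phi (v + e))
     = kk e v * (1 - rho e v)"
    unfolding kk_def rho_def phi_shift using P by (simp add: field_simps)
  ultimately show ?thesis by simp
qed

lemma GG_lim_top: "(GG e \<longlongrightarrow> 1) at_top"
proof -
  have "((\<lambda>v. Phi v / Phi (v + e)) \<longlongrightarrow> 1 / 1) at_top"
  proof (intro tendsto_divide Phi_lim_top filterlim_compose[OF Phi_lim_top])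
    show "filterlim (\<lambda>x. x + e) at_top at_top" by real_asymp
  qed auto
  thus ?thesis by (simp add: GG_def[abs_def])
qed

lemma GG_lim_bot:
  assumes "e > 0" shows "(GG e \<longlongrightarrow> 0) at_bot"
proof (rule tendsto_sandwich[where f="\<lambda>_. 0" and h="\<lambda>v. exp (e * v + e\<^sup>2 / 2)"])
  show "\<forall>\<^sub>F v in at_bot. 0 \<le> GG e v"
    by (simp add: GG_def Phi_pos less_imp_le)
  show "\<forall>\<^sub>F v in at_bot. GG e v \<le> exp (e * v + e\<^sup>2 / 2)"
  proof (intro always_eventually allI)
    fix v
    have "GG e v = rho e v * exp (e * v + e\<^sup>2 / 2)"
      by (simp add: GG_def rho_def field_simps exp_add[symmetric] exp_minus)
    also have "\<dots> \<le> 1 * exp (e * v + e\<^sup>2 / 2)"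
      using rho_less1[OF assms, of v] by (intro mult_right_mono) auto
    finally show "GG e v \<le> exp (e * v + e\<^sup>2 / 2)" by simp
  qed
  show "((\<lambda>v. exp (e * v + e\<^sup>2 / 2)) \<longlongrightarrow> 0) at_bot"
    using assms by real_asymp
qed simp

lemma Phi_cont_chain[continuous_intros]: "isCont f x \<Longrightarrow> isCont (\<lambda>x. Phi (f x)) x"
  by (rule isCont_o2[OF _ Phi_cont])

lemma phi_cont_chain[continuous_intros]: "isCont f x \<Longrightarrow> isCont (\<lambda>x. phi (f x)) x"
  by (rule isCont_o2[OF _ phi_cont])

lemma Phi_measurable[measurable]: "Phi \<in> borel_measurable borel"
  by (rule borel_measurable_continuous_onI) (rule Phi_continuous_on)

lemma kk_cont: "isCont (kk e) x"
  unfolding kk_def[abs_def] using Phi_pos[of "x + e"]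
  by (auto intro!: continuous_intros)

lemma kk_measurable[measurable]: "kk e \<in> borel_measurable borel"
  unfolding kk_def[abs_def] by measurable

lemma phi_anti: "a\<^sup>2 \<le> b\<^sup>2 \<Longrightarrow> phi b \<le> phi a"
  unfolding phi_formula by (intro divide_right_mono) auto

lemma Phi_lower:
  assumes "x \<le> 0" "d > 0" shows "d * phi (x - d) \<le> Phi x"
proof -
  obtain z where z: "x - d < z" "z < x" "Phi x - Phi (x - d) = (x - (x - d)) * phi z"
    using MVT2[of "x - d" x Phi phi] assms Phi_deriv by auto
  have "(- z)\<^sup>2 \<le> (- (x - d))\<^sup>2"
    using z assms by (intro power_mono) auto
  hence "(z)\<^sup>2 \<le> (x - d)\<^sup>2" by (simp add: power2_commute)
  hence "phi (x - d) \<le> phi z" by (rule phi_anti)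
  hence "d * phi (x - d) \<le> d * phi z" using assms by simp
  also have "\<dots> = Phi x - Phi (x - d)" using z by simp
  also have "\<dots> \<le> Phi x" using Phi_pos[of "x - d"] by simp
  finally show ?thesis .
qed

lemma kk_bound:
  assumes "e > 0"
  shows "kk e u \<le> indicator {..-e} u * ((2 / e) * exp (e\<^sup>2 / 8) * exp ((e / 2) * u)) + phi u / Phi 0"
proof (cases "u \<le> -e")
  case True
  have "(e / 2) * phi (u + e - e / 2) \<le> Phi (u + e)"
    using True assms by (intro Phi_lower) auto
  moreover have "phi (u + e - e / 2) = exp (- (e/2) * u - (e/2)\<^sup>2 / 2) * phi u"
  proof -
    have "u + e - e/2 = u + e/2" by simp
    thus ?thesis by (simp only: phi_shift)
  qed
  ultimately have le: "(e / 2) * exp (- (e/2) * u - (e/2)\<^sup>2 / 2) * phi u \<le> Phi (u + e)"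
    by (simp add: mult_ac)
  have pos: "0 < (e / 2) * exp (- (e/2) * u - (e/2)\<^sup>2 / 2) * phi u"
    using assms phi_pos[of u] by simp
  have "kk e u = phi u / Phi (u + e)" by (simp add: kk_def)
  also have "\<dots> \<le> phi u / ((e / 2) * exp (- (e/2) * u - (e/2)\<^sup>2 / 2) * phi u)"
    using le pos phi_pos[of u] by (intro divide_left_mono) auto
  also have "\<dots> = (2 / e) * exp (e\<^sup>2 / 8) * exp ((e / 2) * u)"
    using phi_pos[of u] assms
    by (simp add: field_simps exp_minus[symmetric] exp_add[symmetric] power2_eq_square)
  moreover have "0 < phi u / Phi 0" using phi_pos[of u] Phi_pos[of 0] by simp
  ultimately show ?thesis using True by simp
next
  case False
  have "kk e u = phi u / Phi (u + e)" by (simp add: kk_def)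
  also have "\<dots> \<le> phi u / Phi 0"
    using False phi_pos[of u] Phi_pos[of 0] Phi_pos[of "u+e"] by (intro divide_left_mono Phi_mono) auto
  finally show ?thesis using False by simp
qed

lemma kk_integrable:
  assumes "e > 0" shows "integrable lborel (kk e)"
proof (rule Bochner_Integration.integrable_bound)
  show "integrable lborel (\<lambda>u. indicator {..-e} u * ((2 / e) * exp (e\<^sup>2 / 8) * exp ((e / 2) * u)) + phi u / Phi 0)"
  proof (intro Bochner_Integration.integrable_add integrable_divide)
    have "set_integrable lborel {..-e} (\<lambda>x. exp ((e / 2) * x))"
      using assms by (intro exp_set_integrable) auto
    hence "integrable lborel (\<lambda>u. ((2 / e) * exp (e\<^sup>2 / 8)) * (indicator {..-e} u * exp ((e / 2) * u)))"
      unfolding set_integrable_def by simp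
    thus "integrable lborel (\<lambda>u. indicator {..-e} u * ((2 / e) * exp (e\<^sup>2 / 8) * exp ((e / 2) * u)))"
      by (simp add: mult_ac)
  qed simp
  show "AE x in lborel. norm (kk e x) \<le> norm (indicator {..-e} x * ((2 / e) * exp (e\<^sup>2 / 8) * exp ((e / 2) * x)) + phi x / Phi 0)"
  proof (intro AE_I2)
    fix x
    have "0 \<le> kk e x" using kk_pos[of e x] by simp
    thus "norm (kk e x) \<le> norm (indicator {..-e} x * ((2 / e) * exp (e\<^sup>2 / 8) * exp ((e / 2) * x)) + phi x / Phi 0)"
      using kk_bound[OF assms, of x] by simp
  qed
qed simp

definition Nq :: "real \<Rightarrow> real \<Rightarrow> real" where "Nq e v = (LBINT u:{..v}. kk e u)"
definition ZZ :: "real \<Rightarrow> real" where "ZZ e = (LBINT u. kk e u)"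

lemma Nq_deriv: "e > 0 \<Longrightarrow> DERIV (Nq e) v :> kk e v"
  unfolding Nq_def[abs_def] by (rule DERIV_LBINT_atMost) (auto intro: kk_integrable kk_cont)

lemma Nq_lim_top:
  assumes "e > 0" shows "(Nq e \<longlongrightarrow> ZZ e) at_top"
proof -
  have "((\<lambda>t. integral\<^sup>L lborel (\<lambda>u. indicator {..t} u *\<^sub>R kk e u)) \<longlongrightarrow> integral\<^sup>L lborel (kk e)) at_top"
  proof (rule integral_dominated_convergence_at_top[where w="kk e"])
    show "AE x in lborel. ((\<lambda>i. indicator {..i} x *\<^sub>R kk e x) \<longlongrightarrow> kk e x) at_top"
    proof (intro AE_I2)
      fix x :: real
      have "\<forall>\<^sub>F i in at_top. indicator {..i} x *\<^sub>R kk e x = kk e x"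
        unfolding eventually_at_top_linorder by (intro exI[of _ x]) auto
      thus "((\<lambda>i. indicator {..i} x *\<^sub>R kk e x) \<longlongrightarrow> kk e x) at_top"
        by (rule tendsto_eventually)
    qed
    show "\<forall>\<^sub>F i in at_top. AE x in lborel. norm (indicator {..i} x *\<^sub>R kk e x) \<le> kk e x"
      using kk_pos[of e] by (intro always_eventually allI AE_I2) (auto simp: indicator_def less_imp_le)
  qed (use assms kk_integrable in auto)
  thus ?thesis by (simp add: Nq_def[abs_def] ZZ_def set_lebesgue_integral_def)
qed

lemma Nq_lim_bot:
  assumes "e > 0" shows "(Nq e \<longlongrightarrow> 0) at_bot"
proof -
  have "((\<lambda>t. integral\<^sup>L lborel (\<lambda>u. indicator {..-t} u *\<^sub>R kk e u)) \<longlongrightarrow> integral\<^sup>L lborel (\<lambda>_::real. 0::real)) at_top"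
  proof (rule integral_dominated_convergence_at_top[where w="kk e" and s="\<lambda>t u. indicator {..-t} u *\<^sub>R kk e u" and f="\<lambda>_. 0"])
    show "AE x in lborel. ((\<lambda>i. indicator {..-i} x *\<^sub>R kk e x) \<longlongrightarrow> 0) at_top"
    proof (intro AE_I2)
      fix x :: real
      have "\<forall>\<^sub>F i in at_top. indicator {..-i} x *\<^sub>R kk e x = 0"
        unfolding eventually_at_top_linorder by (intro exI[of _ "- x + 1"]) auto
      thus "((\<lambda>i. indicator {..-i} x *\<^sub>R kk e x) \<longlongrightarrow> 0) at_top"
        by (rule tendsto_eventually)
    qed
    show "\<forall>\<^sub>F i in at_top. AE x in lborel. norm (indicator {..-i} x *\<^sub>R kk e x) \<le> kk e x"
      using kk_pos[of e] by (intro always_eventually allI AE_I2) (auto simp: indicator_def less_imp_le)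
  qed (use assms kk_integrable in auto)
  hence "((\<lambda>t. Nq e (- t)) \<longlongrightarrow> 0) at_top"
    by (simp add: Nq_def[abs_def] set_lebesgue_integral_def)
  thus ?thesis by (simp add: filterlim_at_bot_mirror)
qed

lemma ZZ_ge1:
  assumes "e > 0" shows "1 \<le> ZZ e"
proof -
  have "(LBINT u. phi u) \<le> (LBINT u. kk e u)"
  proof (rule integral_mono)
    fix u
    have "phi u * 1 \<le> phi u / Phi (u + e)"
      using phi_pos[of u] Phi_pos[of "u + e"] Phi_le1[of "u + e"]
      by (simp add: field_simps)
    thus "phi u \<le> kk e u" by (simp add: kk_def)
  qed (use assms kk_integrable in auto)
  thus ?thesis by (simp add: ZZ_def)
qed

lemma main_ineq:
  assumes "e > 0" shows "GG e v < Nq e v / ZZ e"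
proof -
  define Z where "Z = ZZ e"
  have Z: "Z \<ge> 1" using ZZ_ge1[OF assms] by (simp add: Z_def)
  define F where "F v = Nq e v - Z * GG e v" for v
  define ka where "ka v = 1 - Z + Z * rho e v" for v
  have ka_anti: "ka y < ka x" if "x < y" for x y
    using rho_strict_anti[OF assms that] Z by (simp add: ka_def)
  have dF: "DERIV F x :> kk e x * ka x" for x
  proof -
    have "DERIV F x :> kk e x - Z * (kk e x * (1 - rho e x))"
      unfolding F_def[abs_def] using DERIV_diff[OF Nq_deriv[OF assms, of x] DERIV_cmult[OF GG_deriv[of e x], of Z]] .
    thus ?thesis by (simp add: ka_def algebra_simps)
  qed
  have Fbot: "(F \<longlongrightarrow> 0) at_bot"
    using tendsto_diff[OF Nq_lim_bot[OF assms] tendsto_mult[OF tendsto_const[of Z] GG_lim_bot[OF assms]]]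
    by (simp add: F_def[abs_def])
  have Ftop: "(F \<longlongrightarrow> 0) at_top"
    using tendsto_diff[OF Nq_lim_top[OF assms] tendsto_mult[OF tendsto_const[of Z] GG_lim_top[of e]]]
    by (simp add: F_def[abs_def] Z_def)
  have "0 < F v"
  proof (cases "ka v > 0")
    case True
    show ?thesis
    proof (rule DERIV_pos_imp_increasing_at_bot[where f=F and b=v])
      fix x assume "x \<le> v"
      hence "ka x > 0" using True ka_anti[of x v] by (cases "x = v") auto
      thus "\<exists>y. DERIV F x :> y \<and> 0 < y" using dF[of x] kk_pos[of e x] by (intro exI[of _ "kk e x * ka x"]) auto
    qed (rule Fbot)
  next
    case False
    have "0 < F (v + 1)"
    proof (rule DERIV_neg_imp_decreasing_at_top[where f=F and b="v+1"])
      fix x assume "x \<ge> v + 1"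
      hence "ka x < 0" using False ka_anti[of v x] by auto
      thus "\<exists>y. DERIV F x :> y \<and> y < 0" using dF[of x] kk_pos[of e x] by (intro exI[of _ "kk e x * ka x"]) (auto simp: mult_pos_neg)
    qed (rule Ftop)
    also have "F (v + 1) \<le> F v"
    proof (rule DERIV_nonpos_imp_nonincreasing[where f=F])
      fix x assume "v \<le> x"
      hence "ka x \<le> 0" using False ka_anti[of v x] by (cases "x = v") auto
      thus "\<exists>y. DERIV F x :> y \<and> y \<le> 0" using dF[of x] kk_pos[of e x] by (intro exI[of _ "kk e x * ka x"]) (auto simp: mult_nonneg_nonpos less_imp_le)
    qed simp
    finally show ?thesis .
  qed
  thus ?thesis using Z by (simp add: F_def Z_def field_simps)
qed

lemma post_eq:
  assumes sig: "\<sigma> > 0"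
  shows "sel_post_cdf \<sigma> t y \<theta> = Nq ((y - t) / \<sigma>) ((\<theta> - y) / \<sigma>) / ZZ ((y - t) / \<sigma>)"
proof -
  define e where "e = (y - t) / \<sigma>"
  define f where "f s = phi ((s - y) / \<sigma>) / sel_prob \<sigma> t s" for s
  have fsub: "f (y + \<sigma> * u) = kk e u" for u
  proof -
    have "(y + \<sigma> * u - t) / \<sigma> = u + e" using sig by (simp add: e_def field_simps)
    moreover have "(y + \<sigma> * u - y) / \<sigma> = u" using sig by simp
    ultimately show ?thesis by (simp add: f_def kk_def sel_prob_def)
  qed
  have num: "(LBINT s:{..\<theta>}. f s) = \<sigma> * Nq e ((\<theta> - y) / \<sigma>)"
  proof -
    have "(LBINT s:{..\<theta>}. f s) = \<bar>\<sigma>\<bar> *\<^sub>R (LBINT u. indicator {..\<theta>} (y + \<sigma> * u) *\<^sub>R f (y + \<sigma> * u))"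
      unfolding set_lebesgue_integral_def
      by (rule lborel_integral_real_affine) (use sig in auto)
    also have "(LBINT u. indicator {..\<theta>} (y + \<sigma> * u) *\<^sub>R f (y + \<sigma> * u)) = (LBINT u. indicator {..(\<theta> - y) / \<sigma>} u *\<^sub>R kk e u)"
    proof (rule Bochner_Integration.integral_cong[OF refl])
      fix u
      have "(y + \<sigma> * u \<le> \<theta>) = (u \<le> (\<theta> - y) / \<sigma>)" using sig by (simp add: field_simps)
      thus "indicator {..\<theta>} (y + \<sigma> * u) *\<^sub>R f (y + \<sigma> * u) = indicator {..(\<theta> - y) / \<sigma>} u *\<^sub>R kk e u"
        by (simp add: fsub indicator_def)
    qed
    finally show ?thesis using sig by (simp add: Nq_def set_lebesgue_integral_def)
  qed
  have den: "(LBINT s. f s) = \<sigma> * ZZ e"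
  proof -
    have "(LBINT s. f s) = \<bar>\<sigma>\<bar> *\<^sub>R (LBINT u. f (y + \<sigma> * u))"
      by (rule lborel_integral_real_affine) (use sig in auto)
    thus ?thesis using sig by (simp add: fsub ZZ_def)
  qed
  show ?thesis
    unfolding sel_post_cdf_def using num den sig
    by (simp add: f_def[symmetric] e_def[symmetric])
qed

lemma Nq_mono: "e > 0 \<Longrightarrow> a \<le> b \<Longrightarrow> Nq e a \<le> Nq e b"
  by (rule DERIV_nonneg_imp_nondecreasing[where f="Nq e"])
     (auto intro!: exI Nq_deriv less_imp_le[OF kk_pos])

lemma Nq_cont: "e > 0 \<Longrightarrow> isCont (Nq e) v"
  using Nq_deriv DERIV_isCont by blast

lemma quantile_lt:
  assumes sig: "\<sigma> > 0" and y: "y > t" and a: "\<alpha> > 0"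
    and gt: "sel_post_cdf \<sigma> t y \<theta>0 > \<alpha>"
  shows "sel_post_quantile \<sigma> t \<alpha> y < \<theta>0"
proof -
  define e where "e = (y - t) / \<sigma>"
  have e: "e > 0" using sig y by (simp add: e_def)
  have Z: "ZZ e > 0" using ZZ_ge1[OF e] by simp
  define P where "P \<theta> = Nq e ((\<theta> - y) / \<sigma>) / ZZ e" for \<theta>
  have Peq: "sel_post_cdf \<sigma> t y \<theta> = P \<theta>" for \<theta>
    by (simp add: post_eq[OF sig] P_def e_def)
  have Pmono: "P a \<le> P b" if "a \<le> b" for a b
    unfolding P_def using Z that sig
    by (intro divide_right_mono Nq_mono[OF e]) (auto simp: divide_right_mono)
  have Pcont: "isCont P \<theta>" for \<theta>
    unfolding P_def
    by (intro continuous_intros isCont_o2[OF _ Nq_cont[OF e]]) (use Z sig in auto)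
  have Pbot: "(P \<longlongrightarrow> 0) at_bot"
  proof -
    have "filterlim (\<lambda>\<theta>. (\<theta> - y) / \<sigma>) at_bot at_bot"
      using sig by real_asymp
    from filterlim_compose[OF Nq_lim_bot[OF e] this]
    have "((\<lambda>\<theta>. Nq e ((\<theta> - y) / \<sigma>)) \<longlongrightarrow> 0) at_bot" .
    from tendsto_divide_zero[OF this, of "ZZ e"] show ?thesis by (simp add: P_def[abs_def])
  qed
  define A where "A = {\<theta>. \<alpha> \<le> sel_post_cdf \<sigma> t y \<theta>}"
  have "\<forall>\<^sub>F \<theta> in at_bot. P \<theta> < \<alpha>"
    using order_tendstoD(2)[OF Pbot a] .
  then obtain \<theta>1 where th1: "\<And>\<theta>. \<theta> \<le> \<theta>1 \<Longrightarrow> P \<theta> < \<alpha>"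
    unfolding eventually_at_bot_linorder by blast
  have bdd: "bdd_below A"
  proof (rule bdd_belowI[of _ \<theta>1])
    fix \<theta> assume "\<theta> \<in> A"
    hence "\<alpha> \<le> P \<theta>" by (simp add: A_def Peq)
    thus "\<theta>1 \<le> \<theta>" using th1[of \<theta>] by (cases "\<theta> \<le> \<theta>1") auto
  qed
  have "\<forall>\<^sub>F \<theta> in at \<theta>0. P \<theta> > \<alpha>"
    using order_tendstoD(1)[OF Pcont[of \<theta>0, unfolded isCont_def] gt[unfolded Peq]] .
  then obtain d where d: "d > 0" "\<And>\<theta>. \<theta> \<noteq> \<theta>0 \<Longrightarrow> dist \<theta> \<theta>0 < d \<Longrightarrow> P \<theta> > \<alpha>"
    unfolding eventually_at by blast
  have "\<theta>0 - d / 2 \<in> A"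
    using d(1) d(2)[of "\<theta>0 - d/2"] by (simp add: A_def Peq dist_real_def less_imp_le)
  hence "Inf A \<le> \<theta>0 - d / 2" using bdd by (intro cInf_lower)
  thus ?thesis using d(1) by (simp add: sel_post_quantile_def A_def)
qed

lemma kk_anti_e: "e1 \<le> e2 \<Longrightarrow> kk e2 u \<le> kk e1 u"
  unfolding kk_def using phi_pos[of u] Phi_pos[of "u + e1"] Phi_pos[of "u + e2"]
  by (intro divide_left_mono Phi_mono) (auto intro: less_imp_le)

lemma kk_tendsto_e: "X \<longlonglongrightarrow> e \<Longrightarrow> (\<lambda>n. kk (X n) u) \<longlonglongrightarrow> kk e u"
  unfolding kk_def using Phi_pos[of "u + e"]
  by (intro tendsto_intros isCont_tendsto_compose[OF Phi_cont]) auto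

lemma post_right_cont:
  assumes sig: "\<sigma> > 0" and c: "c > t"
  shows "((\<lambda>y. sel_post_cdf \<sigma> t y \<theta>0) \<longlongrightarrow> sel_post_cdf \<sigma> t c \<theta>0) (at_right c)"
proof -
  define e where "e y = (y - t) / \<sigma>" for y
  define v where "v y = (\<theta>0 - y) / \<sigma>" for y
  have Peq: "sel_post_cdf \<sigma> t y \<theta>0 = Nq (e y) (v y) / ZZ (e y)" for y
    by (simp add: post_eq[OF sig] e_def v_def)
  have ec: "e c > 0" using sig c by (simp add: e_def)
  show ?thesis unfolding Peq
  proof (rule tendsto_at_right_sequentially[of c "c + 1"])
    fix S :: "nat \<Rightarrow> real"
    assume S: "\<And>n. c < S n" "\<And>n. S n < c + 1" "decseq S" "S \<longlonglongrightarrow> c"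
    have eS: "(\<lambda>n. e (S n)) \<longlonglongrightarrow> e c" unfolding e_def using sig by (intro tendsto_intros S(4)) auto
    have vS: "(\<lambda>n. v (S n)) \<longlonglongrightarrow> v c" unfolding v_def using sig by (intro tendsto_intros S(4)) auto
    have eSge: "e c \<le> e (S n)" for n using S(1)[of n] sig by (simp add: e_def divide_right_mono)
    have vSlt: "v (S n) < v c" for n using S(1)[of n] sig by (simp add: v_def divide_strict_right_mono)
    have bnd: "norm (kk (e (S n)) u) \<le> kk (e c) u" for n u
      using kk_anti_e[OF eSge[of n], of u] kk_pos[of "e (S n)" u] by simp
    have Z: "(\<lambda>n. ZZ (e (S n))) \<longlonglongrightarrow> ZZ (e c)"
      unfolding ZZ_def
    proof (rule integral_dominated_convergence[where w="kk (e c)"])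
      show "AE x in lborel. (\<lambda>n. kk (e (S n)) x) \<longlonglongrightarrow> kk (e c) x"
        by (intro AE_I2 kk_tendsto_e eS)
      show "AE x in lborel. norm (kk (e (S n)) x) \<le> kk (e c) x" for n
        using bnd by simp
    qed (use kk_integrable[OF ec] in auto)
    have N: "(\<lambda>n. Nq (e (S n)) (v (S n))) \<longlonglongrightarrow> Nq (e c) (v c)"
      unfolding Nq_def set_lebesgue_integral_def
    proof (rule integral_dominated_convergence[where w="kk (e c)"])
      show "AE x in lborel. (\<lambda>n. indicator {..v (S n)} x *\<^sub>R kk (e (S n)) x) \<longlonglongrightarrow>
                indicator {..v c} x *\<^sub>R kk (e c) x"
        using AE_lborel_singleton[of "v c"]
      proof eventually_elim
        case (elim x)
        show ?case
        proof (cases "x < v c")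
          case True
          have "\<forall>\<^sub>F n in sequentially. x < v (S n)" using order_tendstoD(1)[OF vS True] .
          hence ev: "\<forall>\<^sub>F n in sequentially. kk (e (S n)) x = indicator {..v (S n)} x *\<^sub>R kk (e (S n)) x"
            by eventually_elim (auto simp: indicator_def)
          have "(\<lambda>n. kk (e (S n)) x) \<longlonglongrightarrow> kk (e c) x" by (intro kk_tendsto_e eS)
          from Lim_transform_eventually[OF this ev] show ?thesis using True by simp
        next
          case False
          hence "x > v c" using elim by simp
          hence "indicator {..v (S n)} x = (0::real)" for n using vSlt[of n] by (simp add: indicator_def)
          thus ?thesis using \<open>x > v c\<close> by simp
        qed
      qed
      show "AE x in lborel. norm (indicator {..v (S n)} x *\<^sub>R kk (e (S n)) x) \<le> kk (e c) x" for n
        using bnd kk_pos[of "e c"] by (intro AE_I2) (auto simp: indicator_def less_imp_le)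
    qed (use kk_integrable[OF ec] in auto)
    show "(\<lambda>n. Nq (e (S n)) (v (S n)) / ZZ (e (S n))) \<longlonglongrightarrow> Nq (e c) (v c) / ZZ (e c)"
      using ZZ_ge1[OF ec] by (intro tendsto_divide N Z) auto
  qed simp
qed

lemma normal_density_refl:
  assumes "\<sigma> > 0"
  shows "normal_density \<theta>0 \<sigma> (\<theta>0 - \<sigma> * w) = phi w / \<sigma>"
  using assms
  by (simp add: normal_density_def real_sqrt_mult power_mult_distrib field_simps)

lemma normal_measure_upper:
  assumes sig: "\<sigma> > 0"
    and A: "\<And>w. (\<theta>0 - \<sigma> * w \<in> B) = (w \<in> C)" and B: "B \<in> sets borel" and C: "C \<in> sets borel"
  shows "measure (density lborel (normal_density \<theta>0 \<sigma>)) B = measure (density lborel phi) C"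
proof -
  have "emeasure (density lborel (normal_density \<theta>0 \<sigma>)) B =
     (\<integral>\<^sup>+y. ennreal (normal_density \<theta>0 \<sigma> y * indicator B y) \<partial>lborel)"
    using B by (subst emeasure_density) (auto intro!: nn_integral_cong split: split_indicator)
  also have "\<dots> = ennreal \<bar>- \<sigma>\<bar> * (\<integral>\<^sup>+w. ennreal (normal_density \<theta>0 \<sigma> (\<theta>0 + (- \<sigma>) * w) * indicator B (\<theta>0 + (- \<sigma>) * w)) \<partial>lborel)"
    using sig B by (intro nn_integral_real_affine) auto
  also have "(\<integral>\<^sup>+w. ennreal (normal_density \<theta>0 \<sigma> (\<theta>0 + (- \<sigma>) * w) * indicator B (\<theta>0 + (- \<sigma>) * w)) \<partial>lborel)
      = (\<integral>\<^sup>+w. ennreal (1 / \<sigma>) * ennreal (phi w * indicator C w) \<partial>lborel)"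
    using sig by (intro nn_integral_cong) (simp add: normal_density_refl A indicator_def ennreal_mult[symmetric])
  also have "\<dots> = ennreal (1 / \<sigma>) * (\<integral>\<^sup>+w. ennreal (phi w * indicator C w) \<partial>lborel)"
    by (rule nn_integral_cmult) (use C in auto)
  also have "(\<integral>\<^sup>+w. ennreal (phi w * indicator C w) \<partial>lborel) = emeasure (density lborel phi) C"
    using C by (subst emeasure_density) (auto intro!: nn_integral_cong split: split_indicator)
  finally have "emeasure (density lborel (normal_density \<theta>0 \<sigma>)) B = emeasure (density lborel phi) C"
    using sig by (simp add: ennreal_mult[symmetric] mult.assoc[symmetric])
  thus ?thesis by (simp add: measure_def)
qed

lemma normal_measure_ge:
  assumes sig: "\<sigma> > 0"
  shows "measure (density lborel (normal_density \<theta>0 \<sigma>)) {y. a \<le> y} = Phi ((\<theta>0 - a) / \<sigma>)"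
proof -
  have "measure (density lborel (normal_density \<theta>0 \<sigma>)) {y. a \<le> y} = measure (density lborel phi) {..(\<theta>0 - a) / \<sigma>}"
    using sig by (intro normal_measure_upper) (auto simp: field_simps)
  thus ?thesis by (simp add: std_normal_cdf_def)
qed

lemma normal_measure_gt:
  assumes sig: "\<sigma> > 0"
  shows "measure (density lborel (normal_density \<theta>0 \<sigma>)) {y. a < y} = Phi ((\<theta>0 - a) / \<sigma>)"
proof -
  have "measure (density lborel (normal_density \<theta>0 \<sigma>)) {y. a < y} = measure (density lborel phi) {..<(\<theta>0 - a) / \<sigma>}"
    using sig by (intro normal_measure_upper) (auto simp: field_simps)
  also have "\<dots> = measure (density lborel phi) {..(\<theta>0 - a) / \<sigma>}"
  proof -
    have "emeasure (density lborel phi) {..<(\<theta>0 - a) / \<sigma>} = emeasure (density lborel phi) {..(\<theta>0 - a) / \<sigma>}"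
      by (simp add: emeasure_density, intro nn_integral_cong_AE)
         (use AE_lborel_singleton[of "(\<theta>0 - a) / \<sigma>"] in \<open>auto elim!: eventually_mono split: split_indicator\<close>)
    thus ?thesis by (simp add: measure_def)
  qed
  finally show ?thesis by (simp add: std_normal_cdf_def)
qed

theorem proposition1:
  fixes \<sigma> t \<alpha> \<theta>\<^sub>0 :: real
  assumes "\<sigma> > 0" and "0 < \<alpha>" and "\<alpha> < 1"
  shows "measure (density lborel (normal_density \<theta>\<^sub>0 \<sigma>))
            {y. t < y \<and> \<theta>\<^sub>0 \<le> sel_post_quantile \<sigma> t \<alpha> y}
         / measure (density lborel (normal_density \<theta>\<^sub>0 \<sigma>)) {y. t < y} < \<alpha>"
proof -
  note sig = assms(1) and a0 = assms(2) and a1 = assms(3)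
  define T where "T = density lborel (normal_density \<theta>\<^sub>0 \<sigma>)"
  interpret T: prob_space T unfolding T_def by (rule prob_space_normal_density) (use sig in auto)
  define \<beta> where "\<beta> = (\<theta>\<^sub>0 - t) / \<sigma>"
  have Pb: "Phi \<beta> > 0" by (rule Phi_pos)
  define g where "g y = Phi ((\<theta>\<^sub>0 - y) / \<sigma>) / Phi \<beta>" for y
  have PS: "measure T {y. t < y} = Phi \<beta>"
    unfolding T_def \<beta>_def by (rule normal_measure_gt[OF sig])
  have post_gt: "sel_post_cdf \<sigma> t y \<theta>\<^sub>0 > g y" if "y > t" for y
  proof -
    define e where "e = (y - t) / \<sigma>"
    define v where "v = (\<theta>\<^sub>0 - y) / \<sigma>"
    have e: "e > 0" using that sig by (simp add: e_def)
    have "v + e = \<beta>" using sig by (simp add: v_def e_def \<beta>_def field_simps)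
    hence "GG e v = g y" by (simp add: GG_def g_def v_def)
    moreover have "sel_post_cdf \<sigma> t y \<theta>\<^sub>0 = Nq e v / ZZ e"
      by (simp add: post_eq[OF sig] e_def v_def)
    ultimately show ?thesis using main_ineq[OF e, of v] by simp
  qed
  have g_anti: "g c \<le> g y" if "y \<le> c" for y c
    unfolding g_def using that sig Pb
    by (intro divide_right_mono Phi_mono) (auto simp: divide_right_mono less_imp_le)
  have g_cont: "isCont g y" for y
    unfolding g_def[abs_def] using sig Pb by (intro continuous_intros) auto
  have gt: "g t = 1" using Pb by (simp add: g_def \<beta>_def)
  have "((\<lambda>y. Phi ((\<theta>\<^sub>0 - y) / \<sigma>)) \<longlongrightarrow> 0) at_top"
  proof (rule filterlim_compose[OF Phi_lim_bot])
    show "filterlim (\<lambda>y. (\<theta>\<^sub>0 - y) / \<sigma>) at_bot at_top" using sig by real_asymp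
  qed
  hence "\<forall>\<^sub>F y in at_top. Phi ((\<theta>\<^sub>0 - y) / \<sigma>) < \<alpha> * Phi \<beta>"
    using a0 Pb by (intro order_tendstoD(2)) auto
  then obtain N where N: "\<And>y. y \<ge> N \<Longrightarrow> Phi ((\<theta>\<^sub>0 - y) / \<sigma>) < \<alpha> * Phi \<beta>"
    unfolding eventually_at_top_linorder by blast
  define b where "b = max N t"
  have "g b \<le> \<alpha>" using N[of b] Pb by (simp add: b_def g_def field_simps)
  then obtain c where c: "t \<le> c" "c \<le> b" "g c = \<alpha>"
  proof -
    have "t \<le> b" by (simp add: b_def)
    thus ?thesis using IVT2[of g b \<alpha> t] gt a1 g_cont \<open>g b \<le> \<alpha>\<close> that by auto
  qed
  have ct: "c > t" using c gt a1 by (cases "c = t") auto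
  have "sel_post_cdf \<sigma> t c \<theta>\<^sub>0 > \<alpha>" using post_gt[OF ct] c by simp
  hence "\<forall>\<^sub>F y in at_right c. sel_post_cdf \<sigma> t y \<theta>\<^sub>0 > \<alpha>"
    using order_tendstoD(1)[OF post_right_cont[OF sig ct]] by blast
  then obtain b' where b': "b' > c" "\<And>y. y > c \<Longrightarrow> y < b' \<Longrightarrow> sel_post_cdf \<sigma> t y \<theta>\<^sub>0 > \<alpha>"
    using eventually_at_right[of c "c + 1"] by auto
  have sub: "{y. t < y \<and> \<theta>\<^sub>0 \<le> sel_post_quantile \<sigma> t \<alpha> y} \<subseteq> {y. b' \<le> y}"
  proof safe
    fix y assume y: "t < y" "\<theta>\<^sub>0 \<le> sel_post_quantile \<sigma> t \<alpha> y"
    show "b' \<le> y"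
    proof (rule ccontr)
      assume "\<not> b' \<le> y"
      hence "sel_post_cdf \<sigma> t y \<theta>\<^sub>0 > \<alpha>"
      proof (cases "y \<le> c")
        case True
        thus ?thesis using post_gt[OF y(1)] g_anti[OF True] c(3) by simp
      qed (use b' in auto)
      from quantile_lt[OF sig y(1) a0 this] y(2) show False by simp
    qed
  qed
  have "measure T {y. t < y \<and> \<theta>\<^sub>0 \<le> sel_post_quantile \<sigma> t \<alpha> y} \<le> measure T {y. b' \<le> y}"
    by (rule T.finite_measure_mono[OF sub]) (simp add: T_def)
  also have "\<dots> = Phi ((\<theta>\<^sub>0 - b') / \<sigma>)"
    unfolding T_def by (rule normal_measure_ge[OF sig])
  also have "\<dots> < Phi ((\<theta>\<^sub>0 - c) / \<sigma>)"
    using b'(1) sig by (intro Phi_strict_mono divide_strict_right_mono) auto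
  also have "\<dots> = \<alpha> * Phi \<beta>" using c(3) Pb by (simp add: g_def field_simps)
  finally show ?thesis using Pb PS by (simp add: T_def[symmetric] divide_less_eq)
qed

end
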